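(* Let $H\in\mathbb R^{n\times n}$, $f\in\mathbb R^n$, $A\in\mathbb R^{m\times n}$, $b\in\mathbb R^m$, with $\mathcal X=\{x\in\mathbb R^n: Ax\le b\}$ nonempty and $H+H^\top$ positive definite. Let $x^*$ be the unique solution of the affine variational inequality: find $x\in\mathcal X$ with $(Hx+f)^\top(y-x)\ge 0$ for all $y\in\mathcal X$. Then the sequence $\{z_k\}$ generated by the DR-DAQP algorithm (described in the context) converges to $x^*$.
   Context: Notation: $A_i$, $b_i$ denote the $i$-th row of $A$ and entry of $b$; for an index set $\mathcal S$, $A_{\mathcal S}$, $b_{\mathcal S}$, $\lambda_{\mathcal S}$ denote the corresponding submatrix/subvectors. Fix $\rho>0$, set $H_s=\tfrac12(H+H^\top)$, $\tilde H=\rho I+H_s$, and for $z\in\mathbb R^n$ let $\tilde f(z)=f+(H-\tilde H)z$. For a parameter $z$, let $\mathrm{QP}(z)$ denote the strictly convex quadratic program $\min_x \tfrac12 x^\top\tilde Hx+\tilde f(z)^\top x$ subject to $Ax\le b$; its active set at the minimizer $y$ is $\{i: A_iy=b_i\}$. DR-DAQP algorithm: start from an initial $z_0\in\mathbb R^n$, set $\delta=\infty$, and let $\mathcal A_{-1}$ be undefined (so the test below fails at $k=0$). For $k=0,1,2,\dots$: 1. Let $y_k$ be the solution of $\mathrm{QP}(z_k)$ and $\mathcal A_k$ its active set. 2. If $\mathcal A_k=\mathcal A_{k-1}$: let $(\tilde z_k,\lambda_k)$ solve the linear system $\begin{bmatrix}H & A_{\mathcal A_k}^\top\\ A_{\mathcal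 A_k} & 0\end{bmatrix}\begin{bmatrix}x\\ \lambda\end{bmatrix}=\begin{bmatrix}-f\\ b_{\mathcal A_k}\end{bmatrix}$. If $\lambda_k\ge 0$ and $A\tilde z_k\le b$, stop and return $(\tilde z_k,\lambda_k)$. Otherwise, let $\tilde y_k$ be the solution of $\mathrm{QP}(\tilde z_k)$ and redefine $\mathcal A_k$ as its active set; if $\|\tilde y_k-\tilde z_k\|<\delta$, replace $y_k\leftarrow\tilde y_k$, $z_k\leftarrow\tilde z_k$, and set $\delta\leftarrow\|\tilde y_k-\tilde z_k\|$. 3. Set $z_{k+1}=(\rho I+H)^{-1}\big(\rho y_k+Hz_k+\tfrac{1}{2}H_s(y_k-z_k)\big)$. The algorithm iterates indefinitely unless it stops in step 2. *)

theory Defs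
  imports "HOL-Analysis.Analysis"
begin

definition feasible :: "real^'n^'m \<Rightarrow> real^'m \<Rightarrow> real^'n \<Rightarrow> bool" where
  "feasible A b x \<longleftrightarrow> (\<forall>i. (A *v x) $ i \<le> b $ i)"

definition active_set :: "real^'n^'m \<Rightarrow> real^'m \<Rightarrow> real^'n \<Rightarrow> 'm set" where
  "active_set A b x = {i. (A *v x) $ i = b $ i}"

definition Hsym :: "real^'n^'n \<Rightarrow> real^'n^'n" where
  "Hsym H = (1/2) *\<^sub>R (H + transpose H)"

definition Htil :: "real \<Rightarrow> real^'n^'n \<Rightarrow> real^'n^'n" where
  "Htil \<rho> H = \<rho> *\<^sub>R mat 1 + Hsym H"

definition ftil :: "real \<Rightarrow> real^'n^'n \<Rightarrow> real^'n \<Rightarrow> real^'n \<Rightarrow> real^'n" where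
  "ftil \<rho> H f z = f + (H - Htil \<rho> H) *v z"

definition qp_min :: "real^'n^'n \<Rightarrow> real^'n \<Rightarrow> real^'n^'m \<Rightarrow> real^'m \<Rightarrow> real
    \<Rightarrow> real^'n \<Rightarrow> real^'n \<Rightarrow> bool" where
  "qp_min H f A b \<rho> z y \<longleftrightarrow> feasible A b y \<and>
     (\<forall>x. feasible A b x \<longrightarrow>
        (1/2) * (y \<bullet> (Htil \<rho> H *v y)) + ftil \<rho> H f z \<bullet> y
          \<le> (1/2) * (x \<bullet> (Htil \<rho> H *v x)) + ftil \<rho> H f z \<bullet> x)"

text \<open>(x, \<lambda>) solves [H A_S'; A_S 0][x; \<lambda>_S] = [-f; b_S]; the multiplier vector
  \<lambda> :: real^'m is zero outside S, so that A' \<lambda> = A_S' \<lambda>_S.\<close>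
definition kkt_sol :: "real^'n^'n \<Rightarrow> real^'n \<Rightarrow> real^'n^'m \<Rightarrow> real^'m \<Rightarrow> 'm set
    \<Rightarrow> real^'n \<Rightarrow> real^'m \<Rightarrow> bool" where
  "kkt_sol H f A b S x lam \<longleftrightarrow> (\<forall>i. i \<notin> S \<longrightarrow> lam $ i = 0) \<and>
     H *v x + transpose A *v lam = - f \<and> (\<forall>i\<in>S. (A *v x) $ i = b $ i)"

definition stop_test :: "real^'n^'m \<Rightarrow> real^'m \<Rightarrow> 'm set \<Rightarrow> real^'n \<Rightarrow> real^'m \<Rightarrow> bool" where
  "stop_test A b S zt lam \<longleftrightarrow> (\<forall>i\<in>S. lam $ i \<ge> 0) \<and> feasible A b zt"

definition z_update :: "real^'n^'n \<Rightarrow> real \<Rightarrow> real^'n \<Rightarrow> real^'n \<Rightarrow> real^'n" where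
  "z_update H \<rho> y z = matrix_inv (\<rho> *\<^sub>R mat 1 + H) *v
      (\<rho> *\<^sub>R y + H *v z + (1/2) *\<^sub>R (Hsym H *v (y - z)))"

text \<open>One non-stopping iteration k of DR-DAQP.
  Inputs: previous active set Aprev (None at k = 0), the iterate zin at the start of
  the iteration, current \<delta>.  Outputs: final y_k, final z_k (after possible replacement),
  final active set A_k, new \<delta>, and z_{k+1}.\<close>
definition drdaqp_iter :: "real^'n^'n \<Rightarrow> real^'n \<Rightarrow> real^'n^'m \<Rightarrow> real^'m \<Rightarrow> real
    \<Rightarrow> 'm set option \<Rightarrow> real^'n \<Rightarrow> ereal
    \<Rightarrow> real^'n \<Rightarrow> real^'n \<Rightarrow> 'm set \<Rightarrow> ereal \<Rightarrow> real^'n \<Rightarrow> bool" where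
  "drdaqp_iter H f A b \<rho> Aprev zin \<delta>in y z Act \<delta>out znext \<longleftrightarrow>
     (\<exists>y0. qp_min H f A b \<rho> zin y0 \<and>
        (if Aprev = Some (active_set A b y0) then
           (\<exists>zt lam yt. kkt_sol H f A b (active_set A b y0) zt lam \<and>
              \<not> stop_test A b (active_set A b y0) zt lam \<and>
              qp_min H f A b \<rho> zt yt \<and> Act = active_set A b yt \<and>
              (if ereal (norm (yt - zt)) < \<delta>in
               then y = yt \<and> z = zt \<and> \<delta>out = ereal (norm (yt - zt))
               else y = y0 \<and> z = zin \<and> \<delta>out = \<delta>in))
         else y = y0 \<and> z = zin \<and> Act = active_set A b y0 \<and> \<delta>out = \<delta>in)) \<and>
     znext = z_update H \<rho> y z"

definition drdaqp_stop :: "real^'n^'n \<Rightarrow> real^'n \<Rightarrow> real^'n^'m \<Rightarrow> real^'m \<Rightarrow> real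
    \<Rightarrow> 'm set option \<Rightarrow> real^'n \<Rightarrow> real^'n \<Rightarrow> real^'m \<Rightarrow> bool" where
  "drdaqp_stop H f A b \<rho> Aprev zin zt lam \<longleftrightarrow>
     (\<exists>y0. qp_min H f A b \<rho> zin y0 \<and> Aprev = Some (active_set A b y0) \<and>
        kkt_sol H f A b (active_set A b y0) zt lam \<and>
        stop_test A b (active_set A b y0) zt lam)"

text \<open>The first K iterations of a run are valid, non-stopping iterations, chained together;
  zin k is the iterate at the start of iteration k (zin 0 = z_0 arbitrary), z k the final
  value of z_k, \<delta> 0 = \<infinity>.\<close>
definition drdaqp_prefix :: "real^'n^'n \<Rightarrow> real^'n \<Rightarrow> real^'n^'m \<Rightarrow> real^'m \<Rightarrow> real \<Rightarrow> nat
    \<Rightarrow> (nat \<Rightarrow> real^'n) \<Rightarrow> (nat \<Rightarrow> real^'n) \<Rightarrow> (nat \<Rightarrow> real^'n) \<Rightarrow> (nat \<Rightarrow> 'm set)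
    \<Rightarrow> (nat \<Rightarrow> ereal) \<Rightarrow> bool" where
  "drdaqp_prefix H f A b \<rho> K zin y z Act \<delta> \<longleftrightarrow> \<delta> 0 = \<infinity> \<and>
     (\<forall>k<K. drdaqp_iter H f A b \<rho> (if k = 0 then None else Some (Act (k - 1)))
              (zin k) (\<delta> k) (y k) (z k) (Act k) (\<delta> (Suc k)) (zin (Suc k)))"

end

theory Submission imports Defs begin

lemma inner_mat_transpose: "(x::real^'n) \<bullet> (transpose P *v y) = (P *v x) \<bullet> y"
  by (metis dot_lmul_matrix inner_commute transpose_matrix_vector vector_transpose_matrix)

lemma pd_inv:
  fixes P :: "real^'n^'n"
  assumes "\<forall>x. x \<noteq> 0 \<longrightarrow> x \<bullet> (P *v x) > 0"
  shows "P ** matrix_inv P = mat 1 \<and> matrix_inv P ** P = mat 1"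
proof -
  have "\<forall>x. P *v x = 0 \<longrightarrow> x = 0" using assms by (metis inner_zero_right less_irrefl)
  then have "\<exists>B. B ** P = mat 1" using matrix_left_invertible_ker by blast
  then have "invertible P" using invertible_left_inverse by blast
  then show ?thesis unfolding matrix_inv_def invertible_def by (rule someI_ex)
qed

lemma scaleR_mv: "((c::real) *\<^sub>R P) *v (y::real^'n) = c *\<^sub>R (P *v y)"
  by (simp add: vec_eq_iff matrix_vector_mult_def sum_distrib_left algebra_simps)

lemma mat1_mv: "((c::real) *\<^sub>R mat 1) *v (y::real^'n) = c *\<^sub>R y"
  by (simp add: scaleR_mv)

lemma inner_vmul: "(x::real^'n) \<bullet> (y v* H) = y \<bullet> (H *v x)"
  by (metis dot_lmul_matrix inner_commute)

lemma transpose_add: "transpose (P + Q) = transpose P + transpose (Q::real^'n^'n)"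
  by (simp add: transpose_def vec_eq_iff)

lemma Hsym_form: "x \<bullet> (Hsym H *v y) = (x \<bullet> (H *v y) + y \<bullet> (H *v x)) / 2"
  unfolding Hsym_def
  by (simp add: scaleR_mv mat1_mv inner_vmul matrix_vector_mult_add_rdistrib inner_add_right
      inner_mat_transpose inner_commute[of "H *v x"] field_simps)

lemma Htil_form: "x \<bullet> (Htil \<rho> H *v y) = \<rho> * (x \<bullet> y) + x \<bullet> (Hsym H *v y)"
  unfolding Htil_def
  by (simp add: scaleR_mv mat1_mv inner_vmul matrix_vector_mult_add_rdistrib inner_add_right)

lemma M_form: "(x::real^'n) \<bullet> ((\<rho> *\<^sub>R mat 1 + (H::real^'n^'n)) *v y) = \<rho> * (x \<bullet> y) + x \<bullet> (H *v y)"
  by (simp add: scaleR_mv mat1_mv inner_vmul matrix_vector_mult_add_rdistrib inner_add_right)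

lemma R_form: "(x::real^'n) \<bullet> ((\<rho> *\<^sub>R mat 1 + (1/2) *\<^sub>R Hsym H) *v y) = \<rho> * (x \<bullet> y) + (1/2) * (x \<bullet> (Hsym H *v y))"
  by (simp add: scaleR_mv mat1_mv matrix_vector_mult_add_rdistrib inner_add_right)

lemmas expand = matrix_vector_right_distrib matrix_vector_mult_diff_distrib matrix_vector_mult_scaleR
  vec.neg inner_add_left inner_add_right inner_diff_left inner_diff_right inner_scaleR_left
  inner_scaleR_right inner_minus_left inner_minus_right

lemma key_alg:
  fixes H :: "real^'n^'n" and u v :: "real^'n"
  assumes ineq: "(Htil \<rho> H *v (v - u) + H *v u) \<bullet> v \<le> 0"
    and psd: "\<And>x. x \<bullet> (H *v x) \<ge> 0" and rho: "\<rho> \<ge> 0"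
  shows "2 * ((v - u) \<bullet> ((\<rho> *\<^sub>R mat 1 + H) *v u))
     + (v - u) \<bullet> ((\<rho> *\<^sub>R mat 1 + (1/2) *\<^sub>R Hsym H) *v (v - u))
     \<le> - (u \<bullet> (Hsym H *v u))"
proof -
  have p1: "v \<bullet> (H *v v) \<ge> 0" by (rule psd)
  have p2: "(v - u) \<bullet> (H *v (v - u)) \<ge> 0" by (rule psd)
  have i2: "v \<bullet> (Htil \<rho> H *v (v - u) + H *v u) \<le> 0" using ineq by (simp add: inner_commute)
  have p3: "\<rho> * ((v - u) \<bullet> (v - u)) \<ge> 0" using rho by simp
  have e: "(v - u) \<bullet> (v - u) = v \<bullet> v + u \<bullet> u - 2 * (u \<bullet> v)"
    by (simp add: inner_diff_left inner_diff_right inner_commute)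
  have p4: "\<rho> * (v \<bullet> v) + \<rho> * (u \<bullet> u) - 2 * (\<rho> * (u \<bullet> v)) \<ge> 0"
    using p3 unfolding e by (simp add: algebra_simps)
  show ?thesis using p1 p2 i2
    apply (simp add: expand scaleR_mv mat1_mv matrix_vector_mult_add_rdistrib Htil_form Hsym_form inner_commute algebra_simps add_divide_distrib diff_divide_distrib)
    using p4 by linarith
qed
lemma feasible_comb:
  assumes "feasible A b x" "feasible A b y" "0 \<le> t" "t \<le> 1"
  shows "feasible A b (x + t *\<^sub>R (y - x))"
  unfolding feasible_def
proof
  fix i
  have "(A *v (x + t *\<^sub>R (y - x))) $ i = (1 - t) * (A *v x) $ i + t * (A *v y) $ i"
    by (simp add: expand algebra_simps)
  also have "\<dots> \<le> (1 - t) * b $ i + t * b $ i"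
    using assms unfolding feasible_def by (intro add_mono mult_left_mono) auto
  finally show "(A *v (x + t *\<^sub>R (y - x))) $ i \<le> b $ i" by (simp add: algebra_simps)
qed

lemma real_small:
  fixes g a :: real
  assumes "\<forall>t. 0 < t \<and> t \<le> 1 \<longrightarrow> 0 \<le> t * g + t^2 / 2 * a"
  shows "0 \<le> g"
proof (rule ccontr)
  assume g: "\<not> 0 \<le> g"
  show False
  proof (cases "a \<le> 0")
    case True
    then show False using assms[rule_format, of 1] g by simp
  next
    case False
    define t where "t = min 1 (- g / a)"
    have t0: "0 < t" using g False by (simp add: t_def field_simps)
    have t1: "t \<le> 1" by (simp add: t_def)
    have ta: "t * a \<le> - g" using False by (simp add: t_def min_def field_simps split: if_splits)
    have "t * g + t^2 / 2 * a = t * (g + (t * a) / 2)" by (simp add: power2_eq_square algebra_simps)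
    also have "\<dots> < 0" using t0 ta g by (intro mult_pos_neg) auto
    finally show False using assms[rule_format, of t] t0 t1 by simp
  qed
qed

lemma quad_expand:
  "(1/2) * ((y + t *\<^sub>R d) \<bullet> (Htil \<rho> H *v (y + t *\<^sub>R d))) + c \<bullet> (y + t *\<^sub>R d)
   = (1/2) * (y \<bullet> (Htil \<rho> H *v y)) + c \<bullet> y + t * ((Htil \<rho> H *v y + c) \<bullet> d)
     + t^2 / 2 * (d \<bullet> (Htil \<rho> H *v d))"
  by (simp add: expand Htil_form Hsym_form inner_commute algebra_simps power2_eq_square
      add_divide_distrib diff_divide_distrib)

lemma qp_vi:
  assumes "qp_min H f A b \<rho> z y" "feasible A b x"
  shows "0 \<le> (Htil \<rho> H *v y + ftil \<rho> H f z) \<bullet> (x - y)"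
proof -
  define d where "d = x - y"
  define c where "c = ftil \<rho> H f z"
  have fy: "feasible A b y" using assms(1) unfolding qp_min_def by blast
  have "\<forall>t. 0 < t \<and> t \<le> 1 \<longrightarrow> 0 \<le> t * ((Htil \<rho> H *v y + c) \<bullet> d) + t^2 / 2 * (d \<bullet> (Htil \<rho> H *v d))"
  proof (intro allI impI)
    fix t :: real assume t: "0 < t \<and> t \<le> 1"
    have "feasible A b (y + t *\<^sub>R d)" unfolding d_def using feasible_comb[OF fy assms(2)] t by simp
    then have "(1/2) * (y \<bullet> (Htil \<rho> H *v y)) + c \<bullet> y
       \<le> (1/2) * ((y + t *\<^sub>R d) \<bullet> (Htil \<rho> H *v (y + t *\<^sub>R d))) + c \<bullet> (y + t *\<^sub>R d)"
      using assms(1) unfolding qp_min_def c_def by blast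
    then show "0 \<le> t * ((Htil \<rho> H *v y + c) \<bullet> d) + t^2 / 2 * (d \<bullet> (Htil \<rho> H *v d))"
      unfolding quad_expand by simp
  qed
  from real_small[OF this] show ?thesis unfolding c_def d_def .
qed

lemma psd_of_posdef:
  fixes H :: "real^'n^'n"
  assumes "\<forall>x. x \<noteq> 0 \<longrightarrow> x \<bullet> ((H + transpose H) *v x) > 0"
  shows "x \<bullet> (H *v x) \<ge> 0" and "x \<noteq> 0 \<Longrightarrow> x \<bullet> (H *v x) > 0"
proof -
  have e: "x \<bullet> ((H + transpose H) *v x) = 2 * (x \<bullet> (H *v x))"
    by (simp add: matrix_vector_mult_add_rdistrib inner_add_right inner_vmul)
  show "x \<noteq> 0 \<Longrightarrow> x \<bullet> (H *v x) > 0" using assms e by force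
  show "x \<bullet> (H *v x) \<ge> 0" using assms e by (cases "x = 0") force+
qed

lemma qp_unique:
  fixes H :: "real^'n^'n"
  assumes psd: "\<And>x. x \<bullet> (H *v x) \<ge> 0" and rho: "\<rho> > 0"
    and q1: "qp_min H f A b \<rho> z y1" and q2: "qp_min H f A b \<rho> z y2"
  shows "y1 = y2"
proof -
  have f1: "feasible A b y1" "feasible A b y2" using q1 q2 unfolding qp_min_def by blast+
  have v1: "0 \<le> (Htil \<rho> H *v y1 + ftil \<rho> H f z) \<bullet> (y2 - y1)" by (rule qp_vi[OF q1 f1(2)])
  have v2: "0 \<le> (Htil \<rho> H *v y2 + ftil \<rho> H f z) \<bullet> (y1 - y2)" by (rule qp_vi[OF q2 f1(1)])
  have "(y1 - y2) \<bullet> (Htil \<rho> H *v (y1 - y2)) \<le> 0" using v1 v2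
    by (simp add: expand inner_commute algebra_simps)
  then have "\<rho> * ((y1 - y2) \<bullet> (y1 - y2)) + (y1 - y2) \<bullet> (H *v (y1 - y2)) \<le> 0"
    by (simp add: Htil_form Hsym_form)
  then have "\<rho> * ((y1 - y2) \<bullet> (y1 - y2)) \<le> 0" using psd[of "y1 - y2"] by linarith
  then have "(y1 - y2) \<bullet> (y1 - y2) \<le> 0" using rho by (simp add: mult_le_0_iff)
  then show ?thesis by (metis inner_gt_zero_iff not_le right_minus_eq)
qed

lemma inner_transpose_gen: "(x::real^'n) \<bullet> (transpose (P::real^'n^'m) *v l) = (P *v x) \<bullet> l"
  by (metis dot_lmul_matrix inner_commute transpose_matrix_vector)

lemma kkt_unique:
  fixes H :: "real^'n^'n"
  assumes pd: "\<And>x. x \<noteq> 0 \<Longrightarrow> x \<bullet> (H *v x) > 0"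
    and k1: "kkt_sol H f A b S x1 l1" and k2: "kkt_sol H f A b S x2 l2"
  shows "x1 = x2"
proof (rule ccontr)
  assume ne: "x1 \<noteq> x2"
  define d where "d = x1 - x2"
  define m where "m = l1 - l2"
  have eq: "H *v d + transpose A *v m = 0" using k1 k2 unfolding kkt_sol_def d_def m_def
    by (simp add: expand matrix_vector_mult_diff_distrib algebra_simps)
  have "(A *v d) \<bullet> m = 0"
    unfolding inner_vec_def
  proof (rule sum.neutral, rule ballI)
    fix i
    show "(A *v d) $ i \<bullet> m $ i = 0"
    proof (cases "i \<in> S")
      case True
      then show ?thesis using k1 k2 unfolding kkt_sol_def d_def by (simp add: matrix_vector_mult_diff_distrib)
    next
      case False
      then show ?thesis using k1 k2 unfolding kkt_sol_def m_def by simp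
    qed
  qed
  then have "d \<bullet> (transpose A *v m) = 0" by (simp add: inner_vmul inner_commute)
  then have "d \<bullet> (H *v d) = 0" using arg_cong[OF eq, of "\<lambda>v. d \<bullet> v"] by (simp add: inner_add_right)
  moreover have "d \<noteq> 0" using ne d_def by simp
  ultimately show False using pd by force
qed
lemma stop_avi:
  assumes k: "kkt_sol H f A b S zt lam" and st: "stop_test A b S zt lam" and fy: "feasible A b y"
  shows "0 \<le> (H *v zt + f) \<bullet> (y - zt)"
proof -
  have e: "H *v zt + f = - (transpose A *v lam)" using k unfolding kkt_sol_def
    by (simp add: algebra_simps eq_neg_iff_add_eq_0)
  have "(A *v (y - zt)) \<bullet> lam \<le> 0"
    unfolding inner_vec_def
  proof (rule sum_nonpos)
    fix i
    show "(A *v (y - zt)) $ i \<bullet> lam $ i \<le> 0"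
    proof (cases "i \<in> S")
      case True
      then have "(A *v zt) $ i = b $ i" "lam $ i \<ge> 0" using k st unfolding kkt_sol_def stop_test_def by auto
      moreover have "(A *v y) $ i \<le> b $ i" using fy unfolding feasible_def by blast
      ultimately show ?thesis by (simp add: matrix_vector_mult_diff_distrib mult_nonpos_nonneg)
    next
      case False
      then show ?thesis using k unfolding kkt_sol_def by simp
    qed
  qed
  then show ?thesis unfolding e by (simp add: dot_lmul_matrix inner_commute)
qed

lemma avi_unique:
  fixes H :: "real^'n^'n"
  assumes pd: "\<And>x. x \<noteq> 0 \<Longrightarrow> x \<bullet> (H *v x) > 0"
    and a1: "feasible A b x1 \<and> (\<forall>y. feasible A b y \<longrightarrow> (H *v x1 + f) \<bullet> (y - x1) \<ge> 0)"
    and a2: "feasible A b x2 \<and> (\<forall>y. feasible A b y \<longrightarrow> (H *v x2 + f) \<bullet> (y - x2) \<ge> 0)"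
  shows "x1 = x2"
proof (rule ccontr)
  assume ne: "x1 \<noteq> x2"
  have i1: "(H *v x1 + f) \<bullet> (x2 - x1) \<ge> 0" using a1 a2 by blast
  have i2: "(H *v x2 + f) \<bullet> (x1 - x2) \<ge> 0" using a1 a2 by blast
  have "(x1 - x2) \<bullet> (H *v (x1 - x2)) \<le> 0" using i1 i2
    by (simp add: expand inner_commute algebra_simps)
  moreover have "(x1 - x2) \<bullet> (H *v (x1 - x2)) > 0" using pd ne by simp
  ultimately show False by simp
qed
definition Vf :: "real^'n^'n \<Rightarrow> real \<Rightarrow> real^'n \<Rightarrow> real^'n \<Rightarrow> real" where
  "Vf H \<rho> xs x = (matrix_inv (\<rho> *\<^sub>R mat 1 + (1/2) *\<^sub>R Hsym H) *v ((\<rho> *\<^sub>R mat 1 + H) *v (x - xs)))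
     \<bullet> ((\<rho> *\<^sub>R mat 1 + (1/2) *\<^sub>R Hsym H) *v
        (matrix_inv (\<rho> *\<^sub>R mat 1 + (1/2) *\<^sub>R Hsym H) *v ((\<rho> *\<^sub>R mat 1 + H) *v (x - xs))))"

lemma R_sym: "(x::real^'n) \<bullet> ((\<rho> *\<^sub>R mat 1 + (1/2) *\<^sub>R Hsym H) *v y) = ((\<rho> *\<^sub>R mat 1 + (1/2) *\<^sub>R Hsym H) *v x) \<bullet> y"
  by (simp only: R_form inner_commute[of _ y]) (simp add: Hsym_form inner_commute)

lemma lyap_step:
  fixes H :: "real^'n^'n"
  assumes psd: "\<And>x. x \<bullet> (H *v x) \<ge> 0" and rho: "\<rho> > 0"
    and qp: "qp_min H f A b \<rho> z y"
    and avi: "feasible A b xs \<and> (\<forall>y. feasible A b y \<longrightarrow> (H *v xs + f) \<bullet> (y - xs) \<ge> 0)"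
    and Minv: "(\<rho> *\<^sub>R mat 1 + H) ** matrix_inv (\<rho> *\<^sub>R mat 1 + H) = mat 1"
    and Rinv: "(\<rho> *\<^sub>R mat 1 + (1/2) *\<^sub>R Hsym H) ** matrix_inv (\<rho> *\<^sub>R mat 1 + (1/2) *\<^sub>R Hsym H) = mat 1"
      "matrix_inv (\<rho> *\<^sub>R mat 1 + (1/2) *\<^sub>R Hsym H) ** (\<rho> *\<^sub>R mat 1 + (1/2) *\<^sub>R Hsym H) = mat 1"
  shows "Vf H \<rho> xs (z_update H \<rho> y z) \<le> Vf H \<rho> xs z - (z - xs) \<bullet> (Hsym H *v (z - xs))"
proof -
  define M where "M = \<rho> *\<^sub>R mat 1 + H"
  define R where "R = \<rho> *\<^sub>R mat 1 + (1/2) *\<^sub>R Hsym H"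
  define Ri where "Ri = matrix_inv R"
  define u where "u = z - xs"
  define v where "v = y - xs"
  define w where "w = y - z"
  define g where "g = Htil \<rho> H *v (v - u) + H *v u"
  define e where "e = H *v xs + f"
  have id1: "Htil \<rho> H *v y + ftil \<rho> H f z = g + e"
    unfolding g_def e_def u_def v_def ftil_def
    by (simp add: expand matrix_vector_mult_diff_rdistrib algebra_simps)
  have vi: "0 \<le> (g + e) \<bullet> (xs - y)" using qp_vi[OF qp, of xs] avi id1 by simp
  have av: "0 \<le> e \<bullet> (y - xs)" using avi qp unfolding e_def qp_min_def by blast
  have ineq: "g \<bullet> v \<le> 0"
  proof -
    have "(g + e) \<bullet> (xs - y) = - (g \<bullet> v) - e \<bullet> (y - xs)" unfolding v_def
      by (simp add: inner_add_left inner_diff_right algebra_simps)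
    then show ?thesis using vi av by linarith
  qed
  have ka: "2 * (w \<bullet> (M *v u)) + w \<bullet> (R *v w) \<le> - (u \<bullet> (Hsym H *v u))"
  proof -
    have "v - u = w" unfolding u_def v_def w_def by simp
    then show ?thesis using key_alg[of \<rho> H v u] ineq psd rho unfolding g_def M_def R_def by simp
  qed
  define zn where "zn = z_update H \<rho> y z"
  have Mzn: "M *v zn = \<rho> *\<^sub>R y + H *v z + (1/2) *\<^sub>R (Hsym H *v (y - z))"
    unfolding zn_def z_update_def M_def
    by (simp add: matrix_vector_mul_assoc Minv)
  have id2: "M *v (zn - xs) = M *v u + R *v w"
    unfolding matrix_vector_mult_diff_distrib Mzn
    unfolding M_def R_def u_def w_def
    by (simp add: expand scaleR_mv mat1_mv matrix_vector_mult_add_rdistrib algebra_simps)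
  define q where "q = Ri *v (M *v u)"
  have Rq: "R *v q = M *v u" unfolding q_def Ri_def R_def
    by (simp add: matrix_vector_mul_assoc matrix_mul_assoc Rinv)
  have qn: "Ri *v (M *v (zn - xs)) = q + w" unfolding id2 q_def Ri_def R_def
    by (simp add: matrix_vector_right_distrib matrix_vector_mul_assoc Rinv)
  have V0: "Vf H \<rho> xs z = q \<bullet> (R *v q)"
    unfolding Vf_def q_def Ri_def R_def M_def u_def ..
  have V1: "Vf H \<rho> xs zn = (q + w) \<bullet> (R *v (q + w))"
    unfolding Vf_def qn[unfolded Ri_def R_def M_def, symmetric] R_def M_def ..
  have "(q + w) \<bullet> (R *v (q + w)) = q \<bullet> (R *v q) + 2 * (w \<bullet> (R *v q)) + w \<bullet> (R *v w)"
  proof -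
    have "q \<bullet> (R *v w) = (R *v q) \<bullet> w" unfolding R_def by (rule R_sym)
    also have "\<dots> = w \<bullet> (R *v q)" by (rule inner_commute)
    finally have "q \<bullet> (R *v w) = w \<bullet> (R *v q)" .
    then show ?thesis by (simp add: matrix_vector_right_distrib inner_add_left inner_add_right)
  qed
  then have "Vf H \<rho> xs zn = Vf H \<rho> xs z + 2 * (w \<bullet> (M *v u)) + w \<bullet> (R *v w)"
    using V0 V1 Rq by simp
  then show ?thesis using ka unfolding zn_def u_def by linarith
qed
lemma coercive:
  fixes S :: "real^'n^'n"
  assumes pd: "\<And>x. x \<noteq> 0 \<Longrightarrow> x \<bullet> (S *v x) > 0"
  shows "\<exists>\<mu>>0. \<forall>x. \<mu> * (norm x)^2 \<le> x \<bullet> (S *v x)"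
proof -
  have c: "continuous_on (sphere 0 1) (\<lambda>x::real^'n. x \<bullet> (S *v x))"
    by (intro continuous_on_inner continuous_on_id linear_continuous_on matrix_vector_mul_bounded_linear)
  obtain x0 where x0: "x0 \<in> sphere 0 1" and mn: "\<forall>y\<in>sphere 0 1. x0 \<bullet> (S *v x0) \<le> y \<bullet> (S *v y)"
    using continuous_attains_inf[OF compact_sphere _ c] sphere_eq_empty by fastforce
  have "x0 \<noteq> 0" using x0 by auto
  then have mpos: "x0 \<bullet> (S *v x0) > 0" using pd by blast
  show ?thesis
  proof (intro exI conjI allI)
    show "x0 \<bullet> (S *v x0) > 0" by (rule mpos)
    fix x :: "real^'n"
    show "x0 \<bullet> (S *v x0) * (norm x)^2 \<le> x \<bullet> (S *v x)"
    proof (cases "x = 0")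
      case True then show ?thesis by simp
    next
      case False
      define c where "c = 1 / norm x"
      have "c *\<^sub>R x \<in> sphere 0 1" using False by (simp add: c_def)
      then have "x0 \<bullet> (S *v x0) \<le> (c *\<^sub>R x) \<bullet> (S *v (c *\<^sub>R x))" using mn by blast
      also have "\<dots> = c^2 * (x \<bullet> (S *v x))" by (simp add: matrix_vector_mult_scaleR power2_eq_square)
      finally have "x0 \<bullet> (S *v x0) \<le> (x \<bullet> (S *v x)) / (norm x)^2"
        by (simp add: c_def power_one_over divide_inverse mult.commute power_inverse)
      then show ?thesis using False by (simp add: field_simps)
    qed
  qed
qed

lemma Vf_nonneg:
  fixes H :: "real^'n^'n"
  assumes psd: "\<And>x. x \<bullet> (H *v x) \<ge> 0" and rho: "\<rho> > 0"
  shows "0 \<le> Vf H \<rho> xs x"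
proof -
  have "\<And>q. 0 \<le> q \<bullet> ((\<rho> *\<^sub>R mat 1 + (1/2) *\<^sub>R Hsym H) *v q)"
  proof -
    fix q :: "real^'n"
    have "0 \<le> \<rho> * (q \<bullet> q)" using rho by simp
    then show "0 \<le> q \<bullet> ((\<rho> *\<^sub>R mat 1 + (1/2) *\<^sub>R Hsym H) *v q)"
      using psd[of q] by (simp add: R_form Hsym_form)
  qed
  then show ?thesis unfolding Vf_def by blast
qed

lemma conv_core:
  fixes H :: "real^'n^'n"
  assumes psd: "\<And>x. x \<bullet> (H *v x) \<ge> 0" and rho: "\<rho> > 0"
    and avi: "feasible A b xs \<and> (\<forall>y. feasible A b y \<longrightarrow> (H *v xs + f) \<bullet> (y - xs) \<ge> 0)"
    and Minv: "(\<rho> *\<^sub>R mat 1 + H) ** matrix_inv (\<rho> *\<^sub>R mat 1 + H) = mat 1"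
    and Rinv: "(\<rho> *\<^sub>R mat 1 + (1/2) *\<^sub>R Hsym H) ** matrix_inv (\<rho> *\<^sub>R mat 1 + (1/2) *\<^sub>R Hsym H) = mat 1"
      "matrix_inv (\<rho> *\<^sub>R mat 1 + (1/2) *\<^sub>R Hsym H) ** (\<rho> *\<^sub>R mat 1 + (1/2) *\<^sub>R Hsym H) = mat 1"
    and mu: "\<mu> > 0" "\<forall>x. \<mu> * (norm x)^2 \<le> x \<bullet> (Hsym H *v x)"
    and step: "\<forall>k\<ge>K0. qp_min H f A b \<rho> (z k) (y k) \<and> z (Suc k) = z_update H \<rho> (y k) (z k)"
  shows "z \<longlonglongrightarrow> xs"
proof -
  define V where "V = Vf H \<rho> xs"
  define a where "a n = \<mu> * (norm (z (n + K0) - xs))^2" for n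
  have dec: "V (z (Suc n + K0)) \<le> V (z (n + K0)) - a n" for n
  proof -
    have st: "qp_min H f A b \<rho> (z (n + K0)) (y (n + K0))"
      "z (Suc (n + K0)) = z_update H \<rho> (y (n + K0)) (z (n + K0))" using step by auto
    have "V (z (Suc n + K0)) \<le> V (z (n + K0)) - (z (n + K0) - xs) \<bullet> (Hsym H *v (z (n + K0) - xs))"
      using lyap_step[OF psd rho st(1) avi Minv Rinv] st(2) unfolding V_def by simp
    moreover have "a n \<le> (z (n + K0) - xs) \<bullet> (Hsym H *v (z (n + K0) - xs))"
      unfolding a_def using mu(2) by blast
    ultimately show ?thesis by linarith
  qed
  have bound: "V (z (n + K0)) + sum a {..<n} \<le> V (z K0)" for n
  proof (induction n)
    case 0 then show ?case by simp
  next
    case (Suc n)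
    then show ?case using dec[of n] by simp
  qed
  have Vnn: "0 \<le> V x" for x unfolding V_def by (rule Vf_nonneg[OF psd rho])
  have a_nn: "0 \<le> a n" for n unfolding a_def using mu(1) by simp
  have "sum a {..n} \<le> V (z K0)" for n
    using bound[of "Suc n"] Vnn[of "z (Suc n + K0)"] unfolding lessThan_Suc_atMost by linarith
  then have "summable a" using a_nn bounded_imp_summable by blast
  then have "a \<longlonglongrightarrow> 0" by (rule summable_LIMSEQ_zero)
  then have "(\<lambda>n. a n / \<mu>) \<longlonglongrightarrow> 0 / \<mu>" by (intro tendsto_divide tendsto_const) (use mu in auto)
  then have "(\<lambda>n. (norm (z (n + K0) - xs))^2) \<longlonglongrightarrow> 0" unfolding a_def using mu(1) by simp
  then have "(\<lambda>n. sqrt ((norm (z (n + K0) - xs))^2)) \<longlonglongrightarrow> sqrt 0" by (rule tendsto_real_sqrt)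
  then have "(\<lambda>n. norm (z (n + K0) - xs)) \<longlonglongrightarrow> 0" by simp
  then have "(\<lambda>n. z (n + K0) - xs) \<longlonglongrightarrow> 0" by (simp only: tendsto_norm_zero_iff)
  then have "(\<lambda>n. z (n + K0)) \<longlonglongrightarrow> xs" by (simp only: LIM_zero_iff)
  then show ?thesis by (rule LIMSEQ_offset)
qed
lemma iter_facts:
  assumes "drdaqp_iter H f A b \<rho> Ap zin \<delta>in y z Act \<delta>out znext"
  shows "qp_min H f A b \<rho> z y \<and> znext = z_update H \<rho> y z \<and> \<delta>out \<le> \<delta>in \<and>
    (z \<noteq> zin \<longrightarrow> (\<exists>S lam. kkt_sol H f A b S z lam) \<and> \<delta>out = ereal (norm (y - z)) \<and> \<delta>out < \<delta>in)"
  using assms unfolding drdaqp_iter_def by (auto split: if_splits)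

theorem theorem1:
  fixes H :: "real^'n^'n" and f :: "real^'n" and A :: "real^'n^'m" and b :: "real^'m"
    and \<rho> :: real and xstar :: "real^'n"
  assumes nonempty: "\<exists>x. feasible A b x"
    and posdef: "\<forall>x. x \<noteq> 0 \<longrightarrow> x \<bullet> ((H + transpose H) *v x) > 0"
    and rho: "\<rho> > 0"
    and avi: "feasible A b xstar \<and>
              (\<forall>y. feasible A b y \<longrightarrow> (H *v xstar + f) \<bullet> (y - xstar) \<ge> 0)"
  shows "(\<forall>zin y z Act \<delta>. (\<forall>K. drdaqp_prefix H f A b \<rho> K zin y z Act \<delta>)
            \<longrightarrow> z \<longlonglongrightarrow> xstar) \<and>
         (\<forall>K zin y z Act \<delta> zt lam. drdaqp_prefix H f A b \<rho> K zin y z Act \<delta> \<and>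
            drdaqp_stop H f A b \<rho> (if K = 0 then None else Some (Act (K - 1))) (zin K) zt lam
            \<longrightarrow> zt = xstar)"
proof -
  have psd: "\<And>x. x \<bullet> (H *v x) \<ge> 0" using psd_of_posdef(1)[OF posdef] .
  have pd: "\<And>x. x \<noteq> 0 \<Longrightarrow> x \<bullet> (H *v x) > 0" using psd_of_posdef(2)[OF posdef] .
  have Minv: "(\<rho> *\<^sub>R mat 1 + H) ** matrix_inv (\<rho> *\<^sub>R mat 1 + H) = mat 1"
  proof -
    have "\<forall>x. x \<noteq> 0 \<longrightarrow> x \<bullet> ((\<rho> *\<^sub>R mat 1 + H) *v x) > 0"
    proof (intro allI impI)
      fix x :: "real^'n" assume "x \<noteq> 0"
      then have "\<rho> * (x \<bullet> x) > 0" "x \<bullet> (H *v x) > 0" using rho pd by auto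
      then show "x \<bullet> ((\<rho> *\<^sub>R mat 1 + H) *v x) > 0" by (simp add: M_form)
    qed
    then show ?thesis using pd_inv by blast
  qed
  have Rinv: "(\<rho> *\<^sub>R mat 1 + (1/2) *\<^sub>R Hsym H) ** matrix_inv (\<rho> *\<^sub>R mat 1 + (1/2) *\<^sub>R Hsym H) = mat 1"
      "matrix_inv (\<rho> *\<^sub>R mat 1 + (1/2) *\<^sub>R Hsym H) ** (\<rho> *\<^sub>R mat 1 + (1/2) *\<^sub>R Hsym H) = mat 1"
  proof -
    have "\<forall>x. x \<noteq> 0 \<longrightarrow> x \<bullet> ((\<rho> *\<^sub>R mat 1 + (1/2) *\<^sub>R Hsym H) *v x) > 0"
    proof (intro allI impI)
      fix x :: "real^'n" assume "x \<noteq> 0"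
      then have "\<rho> * (x \<bullet> x) > 0" "x \<bullet> (H *v x) > 0" using rho pd by auto
      then show "x \<bullet> ((\<rho> *\<^sub>R mat 1 + (1/2) *\<^sub>R Hsym H) *v x) > 0" by (simp add: R_form Hsym_form)
    qed
    then show "(\<rho> *\<^sub>R mat 1 + (1/2) *\<^sub>R Hsym H) ** matrix_inv (\<rho> *\<^sub>R mat 1 + (1/2) *\<^sub>R Hsym H) = mat 1"
      "matrix_inv (\<rho> *\<^sub>R mat 1 + (1/2) *\<^sub>R Hsym H) ** (\<rho> *\<^sub>R mat 1 + (1/2) *\<^sub>R Hsym H) = mat 1"
      using pd_inv by blast+
  qed
  obtain \<mu> where mu: "\<mu> > 0" "\<forall>x. \<mu> * (norm x)^2 \<le> x \<bullet> (Hsym H *v x)"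
  proof -
    have "\<And>x. x \<noteq> 0 \<Longrightarrow> x \<bullet> (Hsym H *v x) > 0" using pd by (simp add: Hsym_form)
    then show ?thesis using coercive that by blast
  qed
  have part1: "z \<longlonglongrightarrow> xstar" if pre: "\<forall>K. drdaqp_prefix H f A b \<rho> K zin y z Act \<delta>"
    for zin y z and Act :: "nat \<Rightarrow> 'm set" and \<delta>
  proof -
    have F: "qp_min H f A b \<rho> (z k) (y k) \<and> zin (Suc k) = z_update H \<rho> (y k) (z k) \<and> \<delta> (Suc k) \<le> \<delta> k \<and>
      (z k \<noteq> zin k \<longrightarrow> (\<exists>S lam. kkt_sol H f A b S (z k) lam) \<and> \<delta> (Suc k) = ereal (norm (y k - z k)) \<and> \<delta> (Suc k) < \<delta> k)" for k
    proof -
      have "drdaqp_prefix H f A b \<rho> (Suc k) zin y z Act \<delta>" using pre by blast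
      then have "drdaqp_iter H f A b \<rho> (if k = 0 then None else Some (Act (k - 1)))
              (zin k) (\<delta> k) (y k) (z k) (Act k) (\<delta> (Suc k)) (zin (Suc k))"
        unfolding drdaqp_prefix_def by blast
      then show ?thesis by (rule iter_facts)
    qed
    define Y where "Y x = (THE y. qp_min H f A b \<rho> x y)" for x
    have Yeq: "Y x = yy" if "qp_min H f A b \<rho> x yy" for x yy
      unfolding Y_def using that qp_unique[OF psd rho] by blast
    define KK where "KK = {x. \<exists>S lam. kkt_sol H f A b S x lam}"
    define X where "X S = (THE x. \<exists>lam. kkt_sol H f A b S x lam)" for S
    have "KK \<subseteq> range X"
    proof
      fix x assume "x \<in> KK"
      then obtain S lam where k: "kkt_sol H f A b S x lam" unfolding KK_def by blast
      have "X S = x" unfolding X_def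
        apply (rule the_equality) using k kkt_unique[OF pd] by blast+
      then show "x \<in> range X" by (metis rangeI)
    qed
    then have finK: "finite KK" by (rule finite_subset) simp
    define Rs where "Rs = {k. z k \<noteq> zin k}"
    have dec: "decseq \<delta>" using F by (intro decseq_SucI) blast
    have inj: "inj_on (\<lambda>k. \<delta> (Suc k)) Rs"
    proof (rule inj_onI)
      fix k1 k2 assume k1: "k1 \<in> Rs" and k2: "k2 \<in> Rs" and eq: "\<delta> (Suc k1) = \<delta> (Suc k2)"
      have lt: "\<delta> (Suc j2) < \<delta> (Suc j1)" if "j1 < j2" "j2 \<in> Rs" for j1 j2
      proof -
        have "\<delta> (Suc j2) < \<delta> j2" using F[of j2] that(2) unfolding Rs_def by blast
        also have "\<delta> j2 \<le> \<delta> (Suc j1)" using decseqD[OF dec] that(1) by simp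
        finally show ?thesis .
      qed
      show "k1 = k2"
      proof (rule ccontr)
        assume "k1 \<noteq> k2"
        then have "k1 < k2 \<or> k2 < k1" by arith
        then show False
        proof
          assume "k1 < k2"
          then have "\<delta> (Suc k2) < \<delta> (Suc k1)" using lt k2 by blast
          then show False using eq by simp
        next
          assume "k2 < k1"
          then have "\<delta> (Suc k1) < \<delta> (Suc k2)" using lt k1 by blast
          then show False using eq by simp
        qed
      qed
    qed
    have "(\<lambda>k. \<delta> (Suc k)) ` Rs \<subseteq> (\<lambda>x. ereal (norm (Y x - x))) ` KK"
    proof
      fix d assume "d \<in> (\<lambda>k. \<delta> (Suc k)) ` Rs"
      then obtain k where k: "k \<in> Rs" and d: "d = \<delta> (Suc k)" by blast
      have Fk: "z k \<noteq> zin k" using k unfolding Rs_def by blast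
      have "z k \<in> KK" using F[of k] Fk unfolding KK_def by blast
      moreover have "\<delta> (Suc k) = ereal (norm (y k - z k))" using F[of k] Fk by blast
      moreover have "Y (z k) = y k" using F[of k] Yeq by blast
      ultimately have "d = ereal (norm (Y (z k) - z k))" "z k \<in> KK" using d by simp_all
      then show "d \<in> (\<lambda>x. ereal (norm (Y x - x))) ` KK" by (rule image_eqI)
    qed
    moreover have "finite ((\<lambda>x. ereal (norm (Y x - x))) ` KK)" using finK by (rule finite_imageI)
    ultimately have "finite ((\<lambda>k. \<delta> (Suc k)) ` Rs)" by (rule finite_subset)
    then have "finite Rs" using inj finite_imageD by blast
    then obtain K0 where K0: "Rs \<subseteq> {..<K0}" using finite_nat_bounded by blast
    have eqk: "z k = zin k" if "k \<ge> K0" for k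
    proof (rule ccontr)
      assume "z k \<noteq> zin k"
      then have "k \<in> Rs" unfolding Rs_def by blast
      then show False using K0 that by auto
    qed
    have step: "\<forall>k\<ge>K0. qp_min H f A b \<rho> (z k) (y k) \<and> z (Suc k) = z_update H \<rho> (y k) (z k)"
    proof (intro allI impI conjI)
      fix k assume "K0 \<le> k"
      show "qp_min H f A b \<rho> (z k) (y k)" using F[of k] by blast
      have "z (Suc k) = zin (Suc k)" using eqk \<open>K0 \<le> k\<close> by simp
      also have "\<dots> = z_update H \<rho> (y k) (z k)" using F[of k] by blast
      finally show "z (Suc k) = z_update H \<rho> (y k) (z k)" .
    qed
    show ?thesis by (rule conv_core[OF psd rho avi Minv Rinv mu step])
  qed
  have part2: "zt = xstar" if st: "drdaqp_stop H f A b \<rho> Ap zz zt lam" for Ap zz zt lam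
  proof -
    obtain S where k: "kkt_sol H f A b S zt lam" and s: "stop_test A b S zt lam"
      using st unfolding drdaqp_stop_def by blast
    have "feasible A b zt \<and> (\<forall>y. feasible A b y \<longrightarrow> (H *v zt + f) \<bullet> (y - zt) \<ge> 0)"
      using s stop_avi[OF k s] unfolding stop_test_def by blast
    then show ?thesis using avi_unique[OF pd _ avi] by blast
  qed
  show ?thesis using part1 part2 by blast
qed
end
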